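(* Fix a prime $p$ and $n\in\mathbb{N}$, and let $\Gamma_n=\frac1{p^n}\mathbb{Z}\times\frac1{p^n}\mathbb{Z}$. Define $\mathbb{L}^\Sigma_{p,n}:\Gamma_n\to[0,\infty)$ by $\mathbb{L}^\Sigma_{p,n}(\gamma_1,\gamma_2)=\mathbb{L}_{p,n}(\gamma_1)+\mathbb{L}_{p,n}(\gamma_2)$, where $\mathbb{L}_{p,n}$ is the restriction to $\frac1{p^n}\mathbb{Z}$ of $\mathbb{L}_p(r)=|r|+\|r\|_p$. Then $\mathbb{L}^\Sigma_{p,n}$ is a proper length function on $\Gamma_n$ that is of bounded doubling with constant $(4p^8)^4$.
   Context: $\|\cdot\|_p$ is the $p$-adic norm on $\mathbb{Q}$. A length function $\mathbb{L}$ on a discrete group satisfies $\mathbb{L}(\gamma)=0\iff\gamma=e$, $\mathbb{L}(\gamma^{-1})=\mathbb{L}(\gamma)$, $\mathbb{L}(\gamma\gamma')\le\mathbb{L}(\gamma)+\mathbb{L}(\gamma')$. With $B_{\mathbb{L}}(R)=\{\gamma:\mathbb{L}(\gamma)\le R\}$, $\mathbb{L}$ is proper if all $B_{\mathbb{L}}(R)$ are finite, and of bounded doubling with constant $C$ if it is proper and $|B_{\mathbb{L}}(2R)|\le C|B_{\mathbb{L}}(R)|$ for all $R\ge1$. *)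

theory Defs
  imports Complex_Main "HOL-Computational_Algebra.Primes" "HOL-Library.Product_Plus"
begin

definition padic_val :: "nat \<Rightarrow> rat \<Rightarrow> int" where
  "padic_val p r = (let (a, b) = quotient_of r in
      int (multiplicity (int p) a) - int (multiplicity (int p) b))"

definition padic_norm :: "nat \<Rightarrow> rat \<Rightarrow> real" where
  "padic_norm p r = (if r = 0 then 0 else real p powi (- padic_val p r))"

definition Lp :: "nat \<Rightarrow> rat \<Rightarrow> real" where
  "Lp p r = real_of_rat \<bar>r\<bar> + padic_norm p r"

definition Gamma :: "nat \<Rightarrow> nat \<Rightarrow> (rat \<times> rat) set" where
  "Gamma p n = {(a, b). \<exists>k l :: int. a = of_int k / of_nat p ^ n \<and> b = of_int l / of_nat p ^ n}"

definition LSigma :: "nat \<Rightarrow> rat \<times> rat \<Rightarrow> real" where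
  "LSigma p g = Lp p (fst g) + Lp p (snd g)"

definition length_function_on :: "'a::ab_group_add set \<Rightarrow> ('a \<Rightarrow> real) \<Rightarrow> bool" where
  "length_function_on G L \<longleftrightarrow>
     (\<forall>g\<in>G. L g = 0 \<longleftrightarrow> g = 0) \<and>
     (\<forall>g\<in>G. L (- g) = L g) \<and>
     (\<forall>g\<in>G. \<forall>h\<in>G. L (g + h) \<le> L g + L h)"

definition len_ball :: "'a set \<Rightarrow> ('a \<Rightarrow> real) \<Rightarrow> real \<Rightarrow> 'a set" where
  "len_ball G L R = {g\<in>G. L g \<le> R}"

definition proper_length_on :: "'a set \<Rightarrow> ('a \<Rightarrow> real) \<Rightarrow> bool" where
  "proper_length_on G L \<longleftrightarrow> (\<forall>R. finite (len_ball G L R))"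

definition bounded_doubling_on :: "'a set \<Rightarrow> ('a \<Rightarrow> real) \<Rightarrow> real \<Rightarrow> bool" where
  "bounded_doubling_on G L C \<longleftrightarrow> proper_length_on G L \<and>
     (\<forall>R\<ge>1. real (card (len_ball G L (2 * R))) \<le> C * real (card (len_ball G L R)))"

end

theory Submission imports Defs "HOL-Computational_Algebra.Squarefree" begin

lemma pv_div:
  assumes p: "prime p" and a: "a \<noteq> 0" and b: "b \<noteq> 0"
  shows "padic_val p (of_int a / of_int b) = int (multiplicity (int p) a) - int (multiplicity (int p) b)"
proof -
  obtain a' b' where q: "quotient_of (of_int a / of_int b) = (a', b')" by fastforce
  have b'0: "b' > 0" using quotient_of_denom_pos[OF q] .
  have e: "(of_int a / of_int b :: rat) = of_int a' / of_int b'" using quotient_of_div[OF q] .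
  have a'0: "a' \<noteq> 0" using e a b b'0 by auto
  have "of_int (a * b') = (of_int (a' * b) :: rat)" using e a b b'0 by (simp add: field_simps)
  hence eq: "a * b' = a' * b" by (simp only: of_int_eq_iff)
  have pe: "prime_elem (int p)" using p by auto
  have "multiplicity (int p) (a * b') = multiplicity (int p) (a' * b)" using eq by simp
  hence "multiplicity (int p) a + multiplicity (int p) b' = multiplicity (int p) a' + multiplicity (int p) b"
    using prime_elem_multiplicity_mult_distrib[OF pe] a b a'0 b'0 by simp
  thus ?thesis unfolding padic_val_def using q by simp
qed

lemma pn_nonneg: "padic_norm p r \<ge> 0"
  unfolding padic_norm_def by simp

lemma pv_uminus: assumes p: "prime p" shows "padic_val p (- r) = padic_val p r"
proof (cases "r = 0")
  case True thus ?thesis by simp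
next
  case False
  obtain a b where q: "quotient_of r = (a, b)" by fastforce
  have b0: "b > 0" using quotient_of_denom_pos[OF q] .
  have e: "r = of_int a / of_int b" using quotient_of_div[OF q] .
  have a0: "a \<noteq> 0" using e False by auto
  have "- r = of_int (-a) / of_int b" using e by simp
  hence "padic_val p (-r) = int (multiplicity (int p) (-a)) - int (multiplicity (int p) b)"
    using pv_div[OF p, of "-a" b] a0 b0 by simp
  also have "\<dots> = padic_val p r" using pv_div[OF p a0, of b] b0 e by simp
  finally show ?thesis .
qed

lemma pn_uminus: "prime p \<Longrightarrow> padic_norm p (- r) = padic_norm p r"
  unfolding padic_norm_def using pv_uminus by simp

lemma pn_G1:
  assumes p: "prime p" and k: "k \<noteq> 0"
  shows "padic_norm p (of_int k / of_nat p ^ n) = real p powi (int n - int (multiplicity (int p) k))"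
proof -
  have pe: "prime_elem (int p)" using p by auto
  have "(of_int k / of_nat p ^ n :: rat) = of_int k / of_int (int p ^ n)" by simp
  hence "padic_val p (of_int k / of_nat p ^ n) = int (multiplicity (int p) k) - int n"
    using pv_div[OF p k, of "int p ^ n"] p multiplicity_prime_power[OF pe] by (simp add: prime_gt_0_nat)
  thus ?thesis unfolding padic_norm_def using k p by (simp add: prime_gt_0_nat)
qed

lemma mult_sum:
  assumes p: "prime p" and "k + l \<noteq> (0::int)"
  shows "min (multiplicity (int p) k) (multiplicity (int p) l) \<le> multiplicity (int p) (k + l)"
proof -
  let ?m = "min (multiplicity (int p) k) (multiplicity (int p) l)"
  have "int p ^ ?m dvd k" by (rule multiplicity_dvd') simp
  moreover have "int p ^ ?m dvd l" by (rule multiplicity_dvd') simp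
  ultimately have "int p ^ ?m dvd k + l" by simp
  moreover have "\<not> is_unit (int p)" using p by (simp add: prime_gt_1_nat) (metis not_prime_1 One_nat_def)
  ultimately show ?thesis using multiplicity_geI assms(2) by blast
qed

definition G1 :: "nat \<Rightarrow> nat \<Rightarrow> rat set" where
  "G1 p n = {r. \<exists>k::int. r = of_int k / of_nat p ^ n}"

lemma Gamma_eq: "Gamma p n = G1 p n \<times> G1 p n"
  unfolding Gamma_def G1_def by auto

definition B1 :: "nat \<Rightarrow> nat \<Rightarrow> real \<Rightarrow> rat set" where
  "B1 p n T = {r \<in> G1 p n. Lp p r \<le> T}"

lemma Lp_nonneg: "Lp p r \<ge> 0"
  unfolding Lp_def using pn_nonneg[of p r] by simp

lemma Lp_uminus: "prime p \<Longrightarrow> Lp p (- r) = Lp p r"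
  unfolding Lp_def using pn_uminus by simp

lemma Lp_zero: assumes "prime p" shows "Lp p r = 0 \<longleftrightarrow> r = 0"
proof -
  have "real p > 0" using assms prime_gt_0_nat by simp
  hence "real p powi i > 0" for i by simp
  moreover have "real_of_rat \<bar>r\<bar> \<ge> 0" by simp
  moreover have "r \<noteq> 0 \<Longrightarrow> real_of_rat \<bar>r\<bar> > 0" by simp
  ultimately show ?thesis unfolding Lp_def padic_norm_def
    by (smt (verit) of_rat_0 abs_zero)
qed

lemma pn_tri:
  assumes p: "prime p" and r: "r \<in> G1 p n" and s: "s \<in> G1 p n"
  shows "padic_norm p (r + s) \<le> padic_norm p r + padic_norm p s"
proof -
  obtain k where k: "r = of_int k / of_nat p ^ n" using r unfolding G1_def by auto
  obtain l where l: "s = of_int l / of_nat p ^ n" using s unfolding G1_def by auto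
  have rs: "r + s = of_int (k + l) / of_nat p ^ n" using k l by (simp add: add_divide_distrib)
  have p1: "real p \<ge> 1" using p prime_gt_0_nat by (simp add: Suc_le_eq)
  show ?thesis
  proof (cases "k = 0 \<or> l = 0 \<or> k + l = 0")
    case True
    then show ?thesis using k l rs pn_nonneg[of p r] pn_nonneg[of p s]
      by (auto simp: padic_norm_def)
  next
    case False
    hence k0: "k \<noteq> 0" and l0: "l \<noteq> 0" and kl0: "k + l \<noteq> 0" by auto
    have m: "min (multiplicity (int p) k) (multiplicity (int p) l) \<le> multiplicity (int p) (k + l)"
      using mult_sum[OF p kl0] .
    have e: "padic_norm p (r + s) = real p powi (int n - int (multiplicity (int p) (k + l)))"
      using pn_G1[OF p kl0] rs by simp
    have ek: "padic_norm p r = real p powi (int n - int (multiplicity (int p) k))"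
      using pn_G1[OF p k0] k by simp
    have el: "padic_norm p s = real p powi (int n - int (multiplicity (int p) l))"
      using pn_G1[OF p l0] l by simp
    show ?thesis
    proof (cases "multiplicity (int p) k \<le> multiplicity (int p) l")
      case True
      hence "padic_norm p (r + s) \<le> padic_norm p r"
        using e ek m p1 by (simp add: power_int_increasing)
      thus ?thesis using pn_nonneg[of p s] by simp
    next
      case False
      hence "padic_norm p (r + s) \<le> padic_norm p s"
        using e el m p1 by (simp add: power_int_increasing)
      thus ?thesis using pn_nonneg[of p r] by simp
    qed
  qed
qed

lemma Lp_tri:
  assumes p: "prime p" and r: "r \<in> G1 p n" and s: "s \<in> G1 p n"
  shows "Lp p (r + s) \<le> Lp p r + Lp p s"
proof -
  have "real_of_rat \<bar>r + s\<bar> \<le> real_of_rat \<bar>r\<bar> + real_of_rat \<bar>s\<bar>"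
    by (metis abs_triangle_ineq of_rat_add of_rat_less_eq)
  thus ?thesis using pn_tri[OF assms] unfolding Lp_def by simp
qed

lemma G1_add: assumes "r \<in> G1 p n" "s \<in> G1 p n" shows "r + s \<in> G1 p n"
proof -
  obtain k l where "r = of_int k / of_nat p ^ n" "s = of_int l / of_nat p ^ n"
    using assms unfolding G1_def by auto
  hence "r + s = of_int (k + l) / of_nat p ^ n" by (simp add: add_divide_distrib)
  thus ?thesis unfolding G1_def by blast
qed

lemma G1_uminus: assumes "r \<in> G1 p n" shows "- r \<in> G1 p n"
proof -
  obtain k where "r = of_int k / of_nat p ^ n"
    using assms unfolding G1_def by auto
  hence "- r = of_int (- k) / of_nat p ^ n" by simp
  thus ?thesis unfolding G1_def by blast
qed

lemma fin_int: "finite {m::int. real_of_int \<bar>m\<bar> \<le> x}"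
proof -
  have "{m::int. real_of_int \<bar>m\<bar> \<le> x} \<subseteq> {-\<lceil>x\<rceil>..\<lceil>x\<rceil>}"
    by (auto simp: abs_le_iff) (linarith+)
  thus ?thesis by (rule finite_subset) simp
qed

lemma absr:
  assumes "real_of_rat r = real_of_int k / real p ^ n"
  shows "real_of_rat \<bar>r\<bar> = real_of_int \<bar>k\<bar> / real p ^ n"
proof -
  have "real_of_rat \<bar>r\<bar> = \<bar>real_of_rat r\<bar>" by simp
  also have "\<dots> = \<bar>real_of_int k\<bar> / \<bar>real p ^ n\<bar>" using assms by (simp add: abs_divide)
  finally show ?thesis by simp
qed

lemma B1_finite:
  assumes p: "prime p" shows "finite (B1 p n T)"
proof -
  have pp: "real p ^ n > 0" using p prime_gt_0_nat by simp
  have "B1 p n T \<subseteq> (\<lambda>k. of_int k / of_nat p ^ n) ` {m::int. real_of_int \<bar>m\<bar> \<le> T * real p ^ n}"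
  proof
    fix r assume "r \<in> B1 p n T"
    then obtain k where k: "r = of_int k / of_nat p ^ n" and L: "Lp p r \<le> T"
      unfolding B1_def G1_def by auto
    have "real_of_rat \<bar>r\<bar> \<le> T" using L pn_nonneg[of p r] unfolding Lp_def by simp
    moreover have "real_of_rat r = real_of_int k / real p ^ n" using k by (simp add: of_rat_divide of_rat_power)
    ultimately have "\<bar>real_of_int k\<bar> / real p ^ n \<le> T" using absr by simp
    hence "real_of_int \<bar>k\<bar> \<le> T * real p ^ n" using pp by (simp add: divide_le_eq)
    thus "r \<in> (\<lambda>k. of_int k / of_nat p ^ n) ` {m::int. real_of_int \<bar>m\<bar> \<le> T * real p ^ n}"
      using k by auto
  qed
  thus ?thesis using fin_int by (rule finite_subset[OF _ finite_imageI])
qed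

definition A :: "nat \<Rightarrow> nat \<Rightarrow> real \<Rightarrow> rat set" where
  "A p j T = (\<lambda>m. of_int m / of_nat p ^ j :: rat) ` {m::int. real_of_int \<bar>m\<bar> \<le> T * real p ^ j}"

lemma card_int:
  assumes "x \<ge> 0"
  shows "real (card {m::int. real_of_int \<bar>m\<bar> \<le> x}) \<le> 2 * x + 1"
    and "real (card {m::int. real_of_int \<bar>m\<bar> \<le> x}) \<ge> x"
proof -
  have e: "{m::int. real_of_int \<bar>m\<bar> \<le> x} = {-\<lfloor>x\<rfloor>..\<lfloor>x\<rfloor>}"
  proof -
    have "real_of_int \<bar>m\<bar> \<le> x \<longleftrightarrow> -\<lfloor>x\<rfloor> \<le> m \<and> m \<le> \<lfloor>x\<rfloor>" for m
      using le_floor_iff[of "\<bar>m\<bar>" x] abs_le_iff[of m "\<lfloor>x\<rfloor>"] by linarith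
    thus ?thesis by (simp only: set_eq_iff mem_Collect_eq atLeastAtMost_iff) blast
  qed
  have f0: "\<lfloor>x\<rfloor> \<ge> 0" using assms by simp
  have c: "real (card {m::int. real_of_int \<bar>m\<bar> \<le> x}) = 2 * real_of_int \<lfloor>x\<rfloor> + 1"
    unfolding e using f0 by simp
  show "real (card {m::int. real_of_int \<bar>m\<bar> \<le> x}) \<le> 2 * x + 1"
    unfolding c using of_int_floor_le[of x] by linarith
  show "real (card {m::int. real_of_int \<bar>m\<bar> \<le> x}) \<ge> x"
  proof -
    have "real_of_int \<lfloor>x\<rfloor> \<ge> 0" using f0 by simp
    thus ?thesis unfolding c using real_of_int_floor_add_one_gt[of x] by linarith
  qed
qed

lemma A_card_upper:
  assumes "T \<ge> 0" shows "real (card (A p j T)) \<le> 2 * T * real p ^ j + 1"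
proof -
  have "card (A p j T) \<le> card {m::int. real_of_int \<bar>m\<bar> \<le> T * real p ^ j}"
    unfolding A_def by (rule card_image_le[OF fin_int])
  moreover have "real (card {m::int. real_of_int \<bar>m\<bar> \<le> T * real p ^ j}) \<le> 2 * (T * real p ^ j) + 1"
    using assms by (intro card_int) simp
  ultimately show ?thesis by simp
qed

lemma A_card_lower:
  assumes p: "prime p" and "T \<ge> 0" shows "real (card (A p j T)) \<ge> T * real p ^ j"
proof -
  have pp: "(of_nat p ^ j :: rat) \<noteq> 0" using p prime_gt_0_nat by simp
  have "inj_on (\<lambda>m. of_int m / of_nat p ^ j :: rat) {m::int. real_of_int \<bar>m\<bar> \<le> T * real p ^ j}"
    using pp by (auto simp: inj_on_def)
  hence "card (A p j T) = card {m::int. real_of_int \<bar>m\<bar> \<le> T * real p ^ j}"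
    unfolding A_def by (rule card_image)
  moreover have "real (card {m::int. real_of_int \<bar>m\<bar> \<le> T * real p ^ j}) \<ge> T * real p ^ j"
    using assms by (intro card_int) simp
  ultimately show ?thesis by simp
qed

lemma B1_sub_A:
  fixes p n :: nat and T :: real
  assumes p: "prime p" and T: "T \<ge> 1"
  defines "i \<equiv> Max {j. j \<le> n \<and> real p ^ j \<le> T}"
  shows "B1 p n T \<subseteq> A p i T"
proof
  fix r assume "r \<in> B1 p n T"
  then obtain k where k: "r = of_int k / of_nat p ^ n" and L: "Lp p r \<le> T"
    unfolding B1_def G1_def by auto
  have p0: "p > 0" using p prime_gt_0_nat by simp
  have finS: "finite {j. j \<le> n \<and> real p ^ j \<le> T}" by (rule finite_subset[of _ "{..n}"]) auto
  have iS: "d \<le> i" if "d \<le> n" "real p ^ d \<le> T" for d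
    unfolding i_def using that by (intro Max_ge[OF finS]) auto
  have "\<exists>d m'. d \<le> i \<and> r = of_int m' / of_nat p ^ d"
  proof (cases "k = 0")
    case True thus ?thesis using k by (intro exI[of _ 0]) auto
  next
    case False
    define v where "v = multiplicity (int p) k"
    obtain k' where kk: "k = int p ^ v * k'" using multiplicity_dvd[of "int p" k] unfolding v_def dvd_def by blast
    show ?thesis
    proof (cases "n \<le> v")
      case True
      have "(of_nat p ^ v :: rat) = of_nat p ^ (v - n) * of_nat p ^ n"
        using True by (simp flip: power_add)
      hence "r = of_int (k' * int p ^ (v - n)) / of_nat p ^ 0" using k kk p0 by simp
      thus ?thesis using le0 by blast
    next
      case False
      have pn: "padic_norm p r = real p ^ (n - v)"
        using pn_G1[OF p \<open>k \<noteq> 0\<close>, of n] k False unfolding v_def[symmetric]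
        by (simp add: of_nat_diff flip: power_int_of_nat)
      have "real_of_rat \<bar>r\<bar> \<ge> 0" by simp
      hence "real p ^ (n - v) \<le> T" using L pn unfolding Lp_def by linarith
      hence di: "n - v \<le> i" by (intro iS) auto
      have "(of_nat p ^ n :: rat) = of_nat p ^ v * of_nat p ^ (n - v)"
        using False by (simp flip: power_add)
      hence "r = of_int k' / of_nat p ^ (n - v)" using k kk p0 by simp
      thus ?thesis using di by blast
    qed
  qed
  then obtain d m' where d: "d \<le> i" and r: "r = of_int m' / of_nat p ^ d" by blast
  define m where "m = m' * int p ^ (i - d)"
  have "(of_nat p ^ i :: rat) = of_nat p ^ (i - d) * of_nat p ^ d"
    using d by (simp flip: power_add)
  hence rm: "r = of_int m / of_nat p ^ i" using r p0 unfolding m_def by simp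
  have "real_of_rat \<bar>r\<bar> \<le> T" using L pn_nonneg[of p r] unfolding Lp_def by simp
  moreover have "real_of_rat r = real_of_int m / real p ^ i" using rm by (simp add: of_rat_divide of_rat_power)
  ultimately have "\<bar>real_of_int m\<bar> / real p ^ i \<le> T" using absr by simp
  hence "real_of_int \<bar>m\<bar> \<le> T * real p ^ i" using p0 by (simp add: divide_le_eq)
  thus "r \<in> A p i T" unfolding A_def using rm by auto
qed

lemma A_sub_B1:
  assumes p: "prime p" and j: "j \<le> n" and pj: "real p ^ j \<le> S / 2"
  shows "A p j (S / 2) \<subseteq> B1 p n S"
proof
  fix r assume "r \<in> A p j (S / 2)"
  then obtain m where r: "r = of_int m / of_nat p ^ j" and m: "real_of_int \<bar>m\<bar> \<le> S / 2 * real p ^ j"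
    unfolding A_def by auto
  have p0: "p > 0" using p prime_gt_0_nat by simp
  have "(of_nat p ^ n :: rat) = of_nat p ^ (n - j) * of_nat p ^ j"
    using j by (simp flip: power_add)
  hence "r = of_int (m * int p ^ (n - j)) / of_nat p ^ n" using r p0 by simp
  hence G: "r \<in> G1 p n" unfolding G1_def by blast
  have "real_of_rat r = real_of_int m / real p ^ j" using r by (simp add: of_rat_divide of_rat_power)
  hence "real_of_rat \<bar>r\<bar> = real_of_int \<bar>m\<bar> / real p ^ j"
    using absr by simp
  also have "\<dots> \<le> S / 2" using m p0 by (simp add: divide_le_eq)
  finally have a: "real_of_rat \<bar>r\<bar> \<le> S / 2" .
  have "padic_norm p r \<le> real p ^ j"
  proof (cases "m = 0")
    case True thus ?thesis using r by (simp add: padic_norm_def)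
  next
    case False
    have "padic_norm p r = real p powi (int j - int (multiplicity (int p) m))"
      using pn_G1[OF p False, of j] r by simp
    also have "\<dots> \<le> real p powi (int j)"
      using p0 by (intro power_int_increasing) auto
    finally show ?thesis by simp
  qed
  hence "Lp p r \<le> S" using a pj unfolding Lp_def by simp
  thus "r \<in> B1 p n S" using G unfolding B1_def by simp
qed

lemma A_finite: "finite (A p j T)"
  unfolding A_def by (rule finite_imageI[OF fin_int])

lemma doubling1:
  fixes p n :: nat and S :: real
  assumes p: "prime p" and S: "S \<ge> 1 / 2"
  shows "real (card (B1 p n (4 * S))) \<le> 16 * real p ^ 16 * real (card (B1 p n S))"
proof -
  define i where "i = Max {j. j \<le> n \<and> real p ^ j \<le> 4 * S}"
  have p2: "real p \<ge> 2" using p prime_ge_2_nat by simp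
  have finS: "finite {j. j \<le> n \<and> real p ^ j \<le> 4 * S}" by (rule finite_subset[of _ "{..n}"]) auto
  have "i \<in> {j. j \<le> n \<and> real p ^ j \<le> 4 * S}"
    unfolding i_def using S by (intro Max_in[OF finS]) auto
  hence i: "i \<le> n" "real p ^ i \<le> 4 * S" by auto
  have pi1: "real p ^ i \<ge> 1" using p2 by simp
  have "card (B1 p n (4 * S)) \<le> card (A p i (4 * S))"
    using B1_sub_A[OF p, of "4 * S" n] S unfolding i_def by (intro card_mono[OF A_finite]) auto
  hence "real (card (B1 p n (4 * S))) \<le> 2 * (4 * S) * real p ^ i + 1"
    using A_card_upper[of "4 * S" p i] S by simp
  also have "\<dots> \<le> 10 * S * real p ^ i"
  proof -
    have "S * real p ^ i \<ge> S * 1" using S pi1 by (intro mult_left_mono) auto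
    moreover have "2 * (4 * S) * real p ^ i + 1 = 8 * (S * real p ^ i) + 1" by simp
    moreover have "10 * S * real p ^ i = 10 * (S * real p ^ i)" by simp
    ultimately show ?thesis using S by linarith
  qed
  finally have up: "real (card (B1 p n (4 * S))) \<le> 10 * S * real p ^ i" .
  have finB: "finite (B1 p n S)" by (rule B1_finite[OF p])
  have Sp: "S * real p ^ i \<ge> 0" using S by simp
  show ?thesis
  proof (cases "i \<ge> 4")
    case True
    define j where "j = i - 4"
    have pij: "real p ^ i = real p ^ j * real p ^ 4" unfolding j_def using True by (simp flip: power_add)
    have p4: "real p ^ 4 \<ge> 16" using power_mono[OF p2, of 4] by simp
    have pj0: "real p ^ j \<ge> 0" by simp
    have "real p ^ j * 16 \<le> 4 * S" using i(2) pij mult_left_mono[OF p4 pj0] by simp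
    hence pj: "real p ^ j \<le> S / 2" using pj0 by linarith
    have "card (A p j (S / 2)) \<le> card (B1 p n S)"
      by (rule card_mono[OF finB A_sub_B1[OF p _ pj]]) (use i(1) j_def in simp)
    hence lo: "real (card (B1 p n S)) \<ge> S / 2 * real p ^ j"
      using A_card_lower[OF p, of "S / 2" j] S by simp
    have p12: "real p ^ 12 \<ge> 2" using power_mono[OF p2, of 12] by simp
    have "10 * S * real p ^ i = 10 * (S * real p ^ j) * real p ^ 4" using pij by simp
    also have "\<dots> \<le> 8 * (S * real p ^ j) * real p ^ 4 * real p ^ 12"
    proof -
      have "0 \<le> S * real p ^ j * real p ^ 4" using S by simp
      hence "(S * real p ^ j * real p ^ 4) * 10 \<le> (S * real p ^ j * real p ^ 4) * (8 * real p ^ 12)"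
        using p12 by (intro mult_left_mono) auto
      thus ?thesis by (simp add: algebra_simps)
    qed
    also have "\<dots> = 16 * real p ^ 16 * (S / 2 * real p ^ j)"
      by (simp add: algebra_simps flip: power_add)
    also have "\<dots> \<le> 16 * real p ^ 16 * real (card (B1 p n S))"
      using lo by (intro mult_left_mono) auto
    finally show ?thesis using up by linarith
  next
    case False
    have pi3: "real p ^ i \<le> real p ^ 3" using False p2 by (intro power_increasing) auto
    have p13: "real p ^ 13 \<ge> 2" using power_mono[OF p2, of 13] by simp
    have p3: "real p ^ 3 \<ge> 1" using p2 by simp
    have up2: "real (card (B1 p n (4 * S))) \<le> 10 * S * real p ^ 3"
    proof -
      have "10 * S * real p ^ i \<le> 10 * S * real p ^ 3" using pi3 S by (intro mult_left_mono) auto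
      thus ?thesis using up by linarith
    qed
    show ?thesis
    proof (cases "S \<ge> 2")
      case True
      have "card (A p 0 (S / 2)) \<le> card (B1 p n S)"
        by (rule card_mono[OF finB A_sub_B1[OF p]]) (use True in auto)
      hence lo: "real (card (B1 p n S)) \<ge> S / 2"
        using A_card_lower[OF p, of "S / 2" 0] S by simp
      have "10 * S * real p ^ 3 \<le> 8 * S * real p ^ 3 * real p ^ 13"
      proof -
        have "0 \<le> S * real p ^ 3" using S by simp
        hence "(S * real p ^ 3) * 10 \<le> (S * real p ^ 3) * (8 * real p ^ 13)"
          using p13 by (intro mult_left_mono) auto
        thus ?thesis by (simp add: algebra_simps)
      qed
      also have "\<dots> = 16 * real p ^ 16 * (S / 2)" by (simp add: algebra_simps flip: power_add)
      also have "\<dots> \<le> 16 * real p ^ 16 * real (card (B1 p n S))"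
        using lo by (intro mult_left_mono) auto
      finally show ?thesis using up2 by linarith
    next
      case False
      have "0 \<in> B1 p n S" unfolding B1_def G1_def Lp_def padic_norm_def using S
        by (auto intro!: exI[of _ 0])
      hence "card (B1 p n S) \<ge> 1" using finB by (metis card_0_eq empty_iff less_one not_le)
      hence lo: "real (card (B1 p n S)) \<ge> 1" by simp
      have "S * real p ^ 3 \<le> 2 * real p ^ 3" using False p3 by (intro mult_right_mono) auto
      hence "10 * S * real p ^ 3 \<le> 20 * real p ^ 3" by simp
      also have "\<dots> \<le> 16 * real p ^ 3 * real p ^ 13"
      proof -
        have "real p ^ 3 * 20 \<le> real p ^ 3 * (16 * real p ^ 13)" using p13 p3 by (intro mult_left_mono) auto
        thus ?thesis by (simp add: algebra_simps)
      qed
      also have "\<dots> = 16 * real p ^ 16" by (simp flip: power_add)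
      also have "\<dots> \<le> 16 * real p ^ 16 * real (card (B1 p n S))"
        using mult_left_mono[OF lo, of "16 * real p ^ 16"] by simp
      finally show ?thesis using up2 by linarith
    qed
  qed
qed

lemma ball_upper: "len_ball (Gamma p n) (LSigma p) R \<subseteq> B1 p n R \<times> B1 p n R"
proof
  fix g assume "g \<in> len_ball (Gamma p n) (LSigma p) R"
  hence g: "fst g \<in> G1 p n" "snd g \<in> G1 p n" "Lp p (fst g) + Lp p (snd g) \<le> R"
    unfolding len_ball_def Gamma_eq LSigma_def by auto
  have "Lp p (fst g) \<le> R" "Lp p (snd g) \<le> R"
    using g(3) Lp_nonneg[of p "fst g"] Lp_nonneg[of p "snd g"] by linarith+
  thus "g \<in> B1 p n R \<times> B1 p n R" using g unfolding B1_def by (simp add: mem_Times_iff)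
qed

lemma ball_lower: "B1 p n (R / 2) \<times> B1 p n (R / 2) \<subseteq> len_ball (Gamma p n) (LSigma p) R"
  unfolding len_ball_def Gamma_eq B1_def LSigma_def by auto

theorem corollary3p17:
  fixes p n :: nat
  assumes "prime p"
  shows "length_function_on (Gamma p n) (LSigma p)
    \<and> proper_length_on (Gamma p n) (LSigma p)
    \<and> bounded_doubling_on (Gamma p n) (LSigma p) ((4 * real p ^ 8) ^ 4)"
proof -
  note p = assms
  have LF: "length_function_on (Gamma p n) (LSigma p)"
    unfolding length_function_on_def
  proof (intro conjI ballI)
    fix g assume "g \<in> Gamma p n"
    show "LSigma p g = 0 \<longleftrightarrow> g = 0"
      unfolding LSigma_def using Lp_nonneg[of p "fst g"] Lp_nonneg[of p "snd g"] Lp_zero[OF p]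
      by (metis add_nonneg_eq_0_iff prod_eq_iff fst_zero snd_zero)
    show "LSigma p (- g) = LSigma p g"
      unfolding LSigma_def using Lp_uminus[OF p] by simp
  next
    fix g h assume g: "g \<in> Gamma p n" and h: "h \<in> Gamma p n"
    show "LSigma p (g + h) \<le> LSigma p g + LSigma p h"
      using g h Lp_tri[OF p, of "fst g" n "fst h"] Lp_tri[OF p, of "snd g" n "snd h"]
      unfolding LSigma_def Gamma_eq by (auto simp: mem_Times_iff)
  qed
  have fin: "finite (len_ball (Gamma p n) (LSigma p) R)" for R
    by (rule finite_subset[OF ball_upper]) (simp add: B1_finite[OF p])
  have PR: "proper_length_on (Gamma p n) (LSigma p)"
    unfolding proper_length_on_def using fin by blast
  have D: "real (card (len_ball (Gamma p n) (LSigma p) (2 * R)))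
      \<le> (4 * real p ^ 8) ^ 4 * real (card (len_ball (Gamma p n) (LSigma p) R))" if R: "R \<ge> 1" for R
  proof -
    let ?c = "\<lambda>T. real (card (B1 p n T))"
    have "card (len_ball (Gamma p n) (LSigma p) (2 * R)) \<le> card (B1 p n (2 * R) \<times> B1 p n (2 * R))"
      by (rule card_mono[OF _ ball_upper]) (simp add: B1_finite[OF p])
    hence a: "real (card (len_ball (Gamma p n) (LSigma p) (2 * R))) \<le> ?c (2 * R) * ?c (2 * R)"
      unfolding card_cartesian_product by (metis of_nat_le_iff of_nat_mult)
    have d: "?c (2 * R) \<le> 16 * real p ^ 16 * ?c (R / 2)"
      using doubling1[OF p, of "R / 2" n] R by simp
    have c0: "?c (2 * R) \<ge> 0" by simp
    have "?c (2 * R) * ?c (2 * R) \<le> (16 * real p ^ 16 * ?c (R / 2)) * (16 * real p ^ 16 * ?c (R / 2))"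
      using d c0 by (intro mult_mono) auto
    also have "\<dots> = (4 * real p ^ 8) ^ 4 * (?c (R / 2) * ?c (R / 2))"
      by (simp add: algebra_simps flip: power_add power_mult_distrib)
    also have "?c (R / 2) * ?c (R / 2) \<le> real (card (len_ball (Gamma p n) (LSigma p) R))"
    proof -
      have "card (B1 p n (R / 2) \<times> B1 p n (R / 2)) \<le> card (len_ball (Gamma p n) (LSigma p) R)"
        by (rule card_mono[OF fin ball_lower])
      thus ?thesis unfolding card_cartesian_product by (metis of_nat_le_iff of_nat_mult)
    qed
    hence "(4 * real p ^ 8) ^ 4 * (?c (R / 2) * ?c (R / 2)) \<le> (4 * real p ^ 8) ^ 4 * real (card (len_ball (Gamma p n) (LSigma p) R))"
      by (intro mult_left_mono) auto
    finally show ?thesis using a by linarith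
  qed
  show ?thesis using LF PR D unfolding bounded_doubling_on_def by blast
qed

end
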